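(* Let $X_d=X^{\otimes d}$ and suppose $\lambda^X_k/\Lambda^X\sim\beta/(k(\ln k)(\ln\ln k)^{1+s})$ as $k\to\infty$, with $\beta>0$ and $s>0$. Then $$\ln\ln n^{X_d}(\varepsilon)\sim\Bigl(\frac{\beta d}{s\,|\ln(1-\varepsilon^2)|}\Bigr)^{1/s},\quad d\to\infty,\quad\text{for all }\varepsilon\in(0,1).$$
   Context: Let $X$ be a centered random element of a separable Hilbert space $H$ with $\mathbb E\|X\|^2<\infty$, covariance eigenvalues $\lambda^X_1\ge\lambda^X_2\ge\dots\ge0$ (with multiplicity), $\lambda^X_1>0$, trace $\Lambda^X$, and $\bar\lambda^X_k=\lambda^X_k/\Lambda^X$. $X_d=X^{\otimes d}$ is the centered random element of $H^{\otimes d}$ with covariance operator $(K^X)^{\otimes d}$; its eigenvalues are $\prod_{j=1}^d\lambda^X_{k_j}$. With $\bar\lambda^{X_d}_k$ the normalized nonincreasing eigenvalues of $X_d$, $n^{X_d}(\varepsilon)=\min\{n\in\mathbb N:\sum_{k>n}\bar\lambda^{X_d}_k\le\varepsilon^2\}$. *)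

theory Defs
  imports "HOL-Analysis.Analysis" "HOL-Library.Landau_Symbols"
begin

text \<open>Eigenvalues of X are given as a sequence lam indexed from 1 (lam 0 is unused).
  The trace is the sum of all eigenvalues.\<close>

definition trace_ev :: "(nat \<Rightarrow> real) \<Rightarrow> real" where
  "trace_ev lam = (\<Sum>k. lam (Suc k))"

definition tuples :: "nat \<Rightarrow> nat list set" where
  "tuples d = {ks. length ks = d \<and> (\<forall>k\<in>set ks. 1 \<le> k)}"

text \<open>mu (indexed from 1) is a nonincreasing enumeration, with multiplicity, of the
  eigenvalues prod_j lam k_j of the tensor power X^{\<otimes> d}.\<close>

definition is_decr_rearr :: "(nat \<Rightarrow> real) \<Rightarrow> nat \<Rightarrow> (nat \<Rightarrow> real) \<Rightarrow> bool" where
  "is_decr_rearr lam d mu \<longleftrightarrow>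
     (\<exists>\<sigma>. bij_betw \<sigma> {1..} (tuples d) \<and>
          (\<forall>k\<ge>1. mu k = prod_list (map lam (\<sigma> k))) \<and>
          (\<forall>k\<ge>1. mu (Suc k) \<le> mu k))"

definition tensor_eigs :: "(nat \<Rightarrow> real) \<Rightarrow> nat \<Rightarrow> nat \<Rightarrow> real" where
  "tensor_eigs lam d = (SOME mu. is_decr_rearr lam d mu)"

text \<open>n^{X_d}(eps) = min {n : sum_{k>n} normalized eigenvalue_k <= eps^2};
  the trace of X_d is (trace of X)^d.\<close>

definition n_tensor :: "(nat \<Rightarrow> real) \<Rightarrow> nat \<Rightarrow> real \<Rightarrow> nat" where
  "n_tensor lam d \<epsilon> =
     (LEAST n. (\<Sum>j. tensor_eigs lam d (Suc n + j) / trace_ev lam ^ d) \<le> \<epsilon>\<^sup>2)"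

end

theory Submission
  imports Defs
begin



lemma decr_enum_exists:
  fixes f :: "'a \<Rightarrow> real" and A :: "'a set"
  assumes inf: "infinite A"
    and fin: "\<And>\<tau>. \<tau> > 0 \<Longrightarrow> finite {a\<in>A. f a \<ge> \<tau>}"
    and pos: "\<And>a. a \<in> A \<Longrightarrow> f a > 0"
  shows "\<exists>\<sigma>. bij_betw \<sigma> UNIV A \<and> (\<forall>n. f (\<sigma> (Suc n)) \<le> f (\<sigma> n))"
proof -
  define pick where "pick X = (SOME a. a \<in> A - X \<and> (\<forall>b\<in>A - X. f b \<le> f a))" for X
  have pick: "pick X \<in> A - X \<and> (\<forall>b\<in>A - X. f b \<le> f (pick X))" if "finite X" for X
  proof -
    have "infinite (A - X)" using inf that by (simp add: Diff_infinite_finite)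
    then obtain a0 where a0: "a0 \<in> A - X" by (metis finite.emptyI ex_in_conv)
    let ?S = "{a\<in>A - X. f a \<ge> f a0}"
    have "finite ?S" by (rule finite_subset[OF _ fin[of "f a0"]]) (use pos a0 in auto)
    moreover have "a0 \<in> ?S" using a0 by auto
    ultimately have M: "Max (f ` ?S) \<in> f ` ?S" "\<forall>b\<in>?S. f b \<le> Max (f ` ?S)"
      by (auto intro!: Max_in Max_ge)
    then obtain a where a: "a \<in> ?S" "f a = Max (f ` ?S)" by auto
    have "a \<in> A - X \<and> (\<forall>b\<in>A - X. f b \<le> f a)"
    proof (intro conjI ballI)
      show "a \<in> A - X" using a by auto
      fix b assume b: "b \<in> A - X"
      show "f b \<le> f a"
      proof (cases "f b \<ge> f a0")
        case True thus ?thesis using b M a by auto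
      next
        case False thus ?thesis using a by auto
      qed
    qed
    thus ?thesis unfolding pick_def by (rule someI)
  qed
  define U where "U = rec_nat {} (\<lambda>_ X. insert (pick X) X)"
  have U0: "U 0 = {}" and US: "U (Suc n) = insert (pick (U n)) (U n)" for n
    by (simp_all add: U_def)
  have finU: "finite (U n)" for n by (induction n) (simp_all add: U0 US)
  define \<sigma> where "\<sigma> n = pick (U n)" for n
  have \<sigma>U: "\<sigma> n \<in> A - U n" "\<forall>b\<in>A - U n. f b \<le> f (\<sigma> n)" for n
    using pick[OF finU[of n]] by (simp_all add: \<sigma>_def)
  have Uimg: "U n = \<sigma> ` {..<n}" for n
    by (induction n) (simp_all add: U0 US \<sigma>_def lessThan_Suc)
  have inj: "inj \<sigma>"
  proof (rule injI)
    fix m n assume eq: "\<sigma> m = \<sigma> n"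
    show "m = n"
    proof (rule ccontr)
      assume "m \<noteq> n"
      then consider "m < n" | "n < m" by linarith
      thus False
      proof cases
        case 1 then have "\<sigma> m \<in> U n" by (simp add: Uimg)
        thus False using \<sigma>U(1)[of n] eq by auto
      next
        case 2 then have "\<sigma> n \<in> U m" by (simp add: Uimg)
        thus False using \<sigma>U(1)[of m] eq by auto
      qed
    qed
  qed
  have mono: "f (\<sigma> (Suc n)) \<le> f (\<sigma> n)" for n
    using \<sigma>U(1)[of "Suc n"] \<sigma>U(2)[of n] by (auto simp: US)
  have sur: "a \<in> range \<sigma>" if a: "a \<in> A" for a
  proof (rule ccontr)
    assume na: "a \<notin> range \<sigma>"
    have "a \<in> A - U n" for n using a na by (auto simp: Uimg)
    hence le: "f a \<le> f (\<sigma> n)" for n using \<sigma>U(2) by blast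
    have "range \<sigma> \<subseteq> {b\<in>A. f b \<ge> f a}" using le \<sigma>U(1) by auto
    hence "finite (range \<sigma>)" using fin[of "f a"] pos[OF a] by (auto intro: finite_subset)
    thus False using finite_imageD[of \<sigma> UNIV] inj infinite_UNIV_nat by blast
  qed
  have "bij_betw \<sigma> UNIV A"
    unfolding bij_betw_def using inj sur \<sigma>U(1) by auto
  thus ?thesis using mono by blast
qed




lemma sum_lists_prod:
  fixes p :: "nat \<Rightarrow> real"
  assumes "finite A"
  shows "(\<Sum>t\<in>{xs. set xs \<subseteq> A \<and> length xs = d}. prod_list (map p t)) = (sum p A) ^ d"
proof (induction d)
  case 0
  have "{xs. set xs \<subseteq> A \<and> length xs = 0} = {[]}" by auto
  thus ?case by simp
next
  case (Suc d)
  let ?L = "{xs. set xs \<subseteq> A \<and> length xs = d}"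
  have inj: "inj_on (\<lambda>(xs, n). n#xs) (?L \<times> A)" by (auto simp: inj_on_def)
  have "(\<Sum>t\<in>{xs. set xs \<subseteq> A \<and> length xs = Suc d}. prod_list (map p t))
      = (\<Sum>z\<in>?L \<times> A. prod_list (map p ((\<lambda>(xs, n). n#xs) z)))"
    unfolding lists_length_Suc_eq by (rule sum.reindex[OF inj, unfolded comp_def])
  also have "\<dots> = (\<Sum>xs\<in>?L. \<Sum>n\<in>A. p n * prod_list (map p xs))"
    by (simp add: sum.cartesian_product case_prod_beta)
  also have "\<dots> = (\<Sum>xs\<in>?L. sum p A * prod_list (map p xs))"
    by (simp add: sum_distrib_right)
  also have "\<dots> = sum p A * (sum p A)^d" by (simp add: sum_distrib_left[symmetric] Suc)
  finally show ?case by simp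
qed

lemma prod_list_01:
  fixes p :: "nat \<Rightarrow> real"
  assumes "\<forall>x\<in>set t. 0 \<le> p x \<and> p x \<le> 1"
  shows "0 \<le> prod_list (map p t) \<and> prod_list (map p t) \<le> 1"
  using assms
proof (induction t)
  case Nil thus ?case by simp
next
  case (Cons a t)
  thus ?case by (auto intro: mult_le_one)
qed

lemma prod_list_le_elem:
  fixes p :: "nat \<Rightarrow> real"
  assumes "\<forall>x\<in>set t. 0 \<le> p x \<and> p x \<le> 1" "j \<in> set t"
  shows "prod_list (map p t) \<le> p j"
  using assms
proof (induction t)
  case Nil thus ?case by simp
next
  case (Cons a t)
  have pl: "0 \<le> prod_list (map p t)" "prod_list (map p t) \<le> 1"
    using prod_list_01[of t p] Cons.prems(1) by auto
  have pa: "0 \<le> p a" "p a \<le> 1" using Cons.prems(1) by auto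
  show ?case
  proof (cases "j = a")
    case True thus ?thesis using pl pa by (simp add: mult_left_le)
  next
    case False
    hence "j \<in> set t" using Cons.prems(2) by auto
    hence "prod_list (map p t) \<le> p j" using Cons by auto
    thus ?thesis using pl pa by (simp add: mult_le_one order_trans[OF mult_left_le_one_le] )
  qed
qed

lemma mono_from:
  fixes f :: "nat \<Rightarrow> real"
  assumes "\<forall>k\<ge>1. f (Suc k) \<le> f k" "1 \<le> a" "a \<le> b"
  shows "f b \<le> f a"
  using assms(3,2)
proof (induction b rule: dec_induct)
  case base thus ?case by simp
next
  case (step n) thus ?case using assms(1) by (meson order_trans le_trans)
qed

lemma topN:
  fixes f :: "nat \<Rightarrow> real"
  assumes mono: "\<forall>k\<ge>1. f (Suc k) \<le> f k" and I: "finite I" "I \<subseteq> {1..}" "card I = N"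
  shows "sum f I \<le> sum f {1..N}"
proof -
  let ?J = "{1..N}"
  have cJ: "card ?J = N" by simp
  have s1: "sum f I = sum f (I \<inter> ?J) + sum f (I - ?J)"
    using I(1) by (rule sum.Int_Diff)
  have s2: "sum f ?J = sum f (I \<inter> ?J) + sum f (?J - I)"
    by (metis Int_commute finite_atLeastAtMost sum.Int_Diff)
  have cc: "card (I - ?J) = card (?J - I)"
  proof -
    have "card (I - ?J) = card I - card (I \<inter> ?J)" using I(1) by (simp add: card_Diff_subset_Int)
    moreover have "card (?J - I) = card ?J - card (I \<inter> ?J)"
      by (metis Int_commute card_Diff_subset_Int finite_Int finite_atLeastAtMost)
    ultimately show ?thesis using I(3) cJ by simp
  qed
  have a: "\<forall>i\<in>I - ?J. f i \<le> f N"
  proof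
    fix i assume i: "i \<in> I - ?J"
    hence "N < i" "1 \<le> i" using I(2) by auto
    show "f i \<le> f N"
    proof (cases "N = 0")
      case True
      hence "I = {}" using I by auto
      thus ?thesis using i by simp
    next
      case False thus ?thesis using mono_from[OF mono, of N i] \<open>N < i\<close> by simp
    qed
  qed
  have b: "\<forall>j\<in>?J - I. f N \<le> f j" using mono_from[OF mono] by auto
  have "sum f (I - ?J) \<le> of_nat (card (I - ?J)) * f N"
    using sum_bounded_above[of "I - ?J" f "f N"] a by auto
  also have "\<dots> = of_nat (card (?J - I)) * f N" using cc by simp
  also have "\<dots> \<le> sum f (?J - I)"
    using sum_bounded_below[of "?J - I" "f N" f] b by auto
  finally show ?thesis using s1 s2 by linarith
qed




definition Fq :: "real \<Rightarrow> real \<Rightarrow> real" where "Fq s x = ln (ln x) powr (- s) / s"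
definition gq :: "real \<Rightarrow> real \<Rightarrow> real" where "gq s x = 1 / (x * ln x * ln (ln x) powr (1 + s))"

lemma ln_ln_pos: "(4::real) \<le> x \<Longrightarrow> 0 < ln (ln x) \<and> 1 < ln x"
proof -
  assume x: "4 \<le> x"
  have "exp 1 < x" using exp_le x by linarith
  hence "1 < ln x" using x by (metis exp_gt_zero ln_exp ln_less_cancel_iff less_le_trans zero_less_numeral)
  thus ?thesis by simp
qed

lemma Fq_deriv:
  assumes s: "s > 0" and x: "4 \<le> x"
  shows "DERIV (Fq s) x :> - gq s x"
proof -
  have l: "0 < ln (ln x)" "1 < ln x" using ln_ln_pos[OF x] by auto
  have x0: "0 < x" using x by simp
  have "DERIV (\<lambda>x. ln (ln x) powr (- s) / s) x :>
        ((- s) * ln (ln x) powr (- s - 1) * (inverse (ln x) * inverse x)) / s"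
    using l x0 x
    by (auto intro!: derivative_eq_intros simp: field_simps)
  moreover have "((- s) * ln (ln x) powr (- s - 1) * (inverse (ln x) * inverse x)) / s = - gq s x"
  proof -
    have pw: "ln (ln x) powr (- s - 1) = 1 / ln (ln x) powr (1 + s)"
    proof -
      have e: "- s - 1 = - (1 + s)" by simp
      show ?thesis using l by (simp only: e powr_minus) (simp add: divide_inverse)
    qed
    show ?thesis unfolding pw gq_def using s l x0 by (simp add: field_simps)
  qed
  ultimately show ?thesis unfolding Fq_def[abs_def] by simp
qed

lemma gq_pos: "4 \<le> x \<Longrightarrow> 0 < gq s x"
  using ln_ln_pos[of x] by (simp add: gq_def)

lemma gq_antimono:
  assumes "4 \<le> x" "x \<le> y" "0 < s"
  shows "gq s y \<le> gq s x"
proof -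
  have lx: "0 < ln (ln x)" "1 < ln x" using ln_ln_pos[OF assms(1)] by auto
  have ly: "0 < ln (ln y)" "1 < ln y" using ln_ln_pos[of y] assms by auto
  have a: "ln x \<le> ln y" using assms by simp
  have "ln (ln x) \<le> ln (ln y)" using lx a by simp
  hence b: "ln (ln x) powr (1 + s) \<le> ln (ln y) powr (1 + s)"
    using lx assms by (auto intro: powr_mono2)
  have c: "0 < ln (ln x) powr (1 + s)" using lx by simp
  have "x * ln x * ln (ln x) powr (1 + s) \<le> y * ln y * ln (ln y) powr (1 + s)"
    using assms a b c lx by (intro mult_mono) auto
  moreover have "0 < x * ln x * ln (ln x) powr (1 + s)" using lx c assms by simp
  ultimately show ?thesis unfolding gq_def by (intro divide_left_mono) auto
qed

lemma Fq_diff_bounds: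
  assumes s: "0 < s" and x: "4 \<le> x"
  shows "Fq s x - Fq s (x + 1) \<le> gq s x" "gq s (x + 1) \<le> Fq s x - Fq s (x + 1)"
proof -
  obtain z where z: "x < z" "z < x + 1" "Fq s (x + 1) - Fq s x = (x + 1 - x) * (- gq s z)"
    using MVT2[of x "x+1" "Fq s" "\<lambda>t. - gq s t"] Fq_deriv[OF s] x by force
  have "gq s z \<le> gq s x" using gq_antimono[of x z s] z x s by auto
  moreover have "gq s (x+1) \<le> gq s z" using gq_antimono[of z "x+1" s] z x s by auto
  ultimately show "Fq s x - Fq s (x + 1) \<le> gq s x" "gq s (x + 1) \<le> Fq s x - Fq s (x + 1)"
    using z by auto
qed

lemma Fq_lim: 
  assumes s: "0 < s"
  shows "(\<lambda>n. Fq s (real n)) \<longlonglongrightarrow> 0"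
proof -
  have "filterlim (\<lambda>n. ln (ln (real n))) at_top sequentially"
    by (intro filterlim_compose[OF ln_at_top] filterlim_compose[OF ln_at_top] filterlim_real_sequentially)
  hence "(\<lambda>n. ln (ln (real n)) powr (- s)) \<longlonglongrightarrow> 0"
    using s by (intro tendsto_neg_powr) auto
  hence "(\<lambda>n. ln (ln (real n)) powr (- s) / s) \<longlonglongrightarrow> 0 / s"
    by (intro tendsto_divide) (use s in auto)
  thus ?thesis by (simp add: Fq_def)
qed




definition Rt :: "(nat \<Rightarrow> real) \<Rightarrow> nat \<Rightarrow> real" where
  "Rt p m = 1 - (\<Sum>i<m. p (Suc i))"

locale pseq =
  fixes p :: "nat \<Rightarrow> real"
  assumes ppos: "\<forall>k\<ge>1. 0 < p k"
    and pdec: "\<forall>k\<ge>1. p (Suc k) \<le> p k"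
    and psums: "(\<lambda>k. p (Suc k)) sums 1"
begin

lemma R_sums: "(\<lambda>n. p (Suc (n + m))) sums Rt p m"
  using sums_split_initial_segment[OF psums, of m] by (simp add: Rt_def)

lemma partial_le1: "(\<Sum>i<m. p (Suc i)) \<le> 1"
  using sum_le_suminf[of "\<lambda>k. p (Suc k)" "{..<m}"] psums ppos
  by (auto simp: sums_iff less_imp_le)

lemma p_nonneg: "0 \<le> p (Suc i)"
  using ppos by (simp add: less_imp_le)

lemma partial_nonneg: "0 \<le> (\<Sum>i<m. p (Suc i))"
  using p_nonneg by (simp add: sum_nonneg)

lemma R_01: "0 \<le> Rt p m" "Rt p m \<le> 1"
  using partial_le1[of m] partial_nonneg[of m] by (auto simp: Rt_def)

lemma p_le_inv: assumes "1 \<le> k" shows "p k \<le> 1 / real k"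
proof -
  have "(\<Sum>i<k. p k) \<le> (\<Sum>i<k. p (Suc i))"
    using assms by (intro sum_mono mono_from[OF pdec]) auto
  hence "real k * p k \<le> 1" using partial_le1[of k] by simp
  thus ?thesis using assms by (simp add: field_simps)
qed

lemma p_le1: "1 \<le> k \<Longrightarrow> p k \<le> 1"
  using p_le_inv[of k] by (simp add: divide_le_eq_1 order_trans)

lemma tail_upper:
  assumes s: "0 < s" and M: "4 \<le> M" and c: "0 \<le> C"
    and bd: "\<forall>k\<ge>M. p k \<le> C * gq s (real k)" and m: "M \<le> m"
  shows "Rt p m \<le> C * Fq s (real m)"
proof -
  have lim: "(\<lambda>n. Fq s (real (n + m))) \<longlonglongrightarrow> 0"
    using LIMSEQ_ignore_initial_segment[OF Fq_lim[OF s], of m] by simp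
  have tel: "(\<lambda>n. C * (Fq s (real (n + m)) - Fq s (real (Suc (n + m))))) sums (C * (Fq s (real m) - 0))"
    using sums_mult[OF telescope_sums'[OF lim], of C] by simp
  have "\<And>n. p (Suc (n + m)) \<le> C * (Fq s (real (n + m)) - Fq s (real (Suc (n + m))))"
  proof -
    fix n
    have x4: "4 \<le> real (n + m)" using M m by simp
    have "p (Suc (n + m)) \<le> C * gq s (real (Suc (n + m)))" using bd[rule_format, of "Suc (n + m)"] M m by simp
    also have "\<dots> \<le> C * (Fq s (real (n + m)) - Fq s (real (Suc (n + m))))"
      using Fq_diff_bounds(2)[OF s x4] c by (intro mult_left_mono) (auto simp: add.commute)
    finally show "p (Suc (n + m)) \<le> C * (Fq s (real (n + m)) - Fq s (real (Suc (n + m))))" .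
  qed
  from sums_le[OF this R_sums tel] show ?thesis by simp
qed

lemma tail_lower:
  assumes s: "0 < s" and M: "4 \<le> M" and c: "0 \<le> C"
    and bd: "\<forall>k\<ge>M. C * gq s (real k) \<le> p k" and m: "M \<le> m"
  shows "C * Fq s (real (Suc m)) \<le> Rt p m"
proof -
  have lim: "(\<lambda>n. Fq s (real (n + Suc m))) \<longlonglongrightarrow> 0"
    using LIMSEQ_ignore_initial_segment[OF Fq_lim[OF s], of "Suc m"] by simp
  have tel: "(\<lambda>n. C * (Fq s (real (n + Suc m)) - Fq s (real (Suc (n + Suc m))))) sums (C * (Fq s (real (Suc m)) - 0))"
    using sums_mult[OF telescope_sums'[OF lim], of C] by simp
  have "\<And>n. C * (Fq s (real (n + Suc m)) - Fq s (real (Suc (n + Suc m)))) \<le> p (Suc (n + m))"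
  proof -
    fix n
    have x4: "4 \<le> real (n + Suc m)" using M m by simp
    have "C * (Fq s (real (n + Suc m)) - Fq s (real (Suc (n + Suc m)))) \<le> C * gq s (real (n + Suc m))"
      using Fq_diff_bounds(1)[OF s x4] c by (intro mult_left_mono) (auto simp: add.commute)
    also have "\<dots> \<le> p (Suc (n + m))" using bd[rule_format, of "Suc (n + m)"] M m by simp
    finally show "C * (Fq s (real (n + Suc m)) - Fq s (real (Suc (n + Suc m)))) \<le> p (Suc (n + m))" .
  qed
  from sums_le[OF this tel R_sums] show ?thesis by simp
qed

end




definition Pt :: "(nat \<Rightarrow> real) \<Rightarrow> nat list \<Rightarrow> real" where
  "Pt p t = prod_list (map p t)"

lemma prod_lam_eq: "(\<forall>k. lam k = T * p k) \<Longrightarrow> prod_list (map lam t) = T ^ length t * Pt p t"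
  by (induction t) (simp_all add: Pt_def)

locale tens = pseq p for p +
  fixes lam :: "nat \<Rightarrow> real" and T :: real
  assumes Tpos: "0 < T" and lamp: "\<forall>k. lam k = T * p k"
begin

lemma p01: "\<forall>x\<in>set t. 1 \<le> x \<Longrightarrow> \<forall>x\<in>set t. 0 \<le> p x \<and> p x \<le> 1"
  using ppos p_le1 by (auto simp: less_imp_le)

lemma Pt_pos: "\<forall>x\<in>set t. 1 \<le> x \<Longrightarrow> 0 < Pt p t"
  using ppos by (induction t) (auto simp: Pt_def)

lemma Pt_le_elem: "t \<in> tuples d \<Longrightarrow> j \<in> set t \<Longrightarrow> Pt p t \<le> p j"
  unfolding Pt_def using prod_list_le_elem p01 by (auto simp: tuples_def)

lemma rearr_exists:
  assumes d: "1 \<le> d"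
  shows "is_decr_rearr lam d (tensor_eigs lam d)"
proof -
  have inf: "infinite (tuples d)"
  proof
    assume "finite (tuples d)"
    hence "finite (hd ` tuples d)" by simp
    moreover have "{1..} \<subseteq> hd ` tuples d"
    proof
      fix k :: nat assume k: "k \<in> {1..}"
      have "k # replicate (d - 1) 1 \<in> tuples d" using k d by (auto simp: tuples_def)
      thus "k \<in> hd ` tuples d" by force
    qed
    ultimately show False using infinite_Ici[of "1::nat"] finite_subset by blast
  qed
  have fin: "finite {t\<in>tuples d. Pt p t \<ge> \<tau>}" if tau: "\<tau> > 0" for \<tau>
  proof -
    define K where "K = nat \<lceil>1 / \<tau>\<rceil>"
    have small: "p j < \<tau>" if "K < j" for j
    proof -
      have "1 / \<tau> < real j" using that unfolding K_def by linarith
      moreover have "0 < real j" using that by simp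
      ultimately have "1 / real j < \<tau>" using tau by (simp add: field_simps)
      thus ?thesis using p_le_inv[of j] that by linarith
    qed
    have "{t\<in>tuples d. Pt p t \<ge> \<tau>} \<subseteq> {xs. set xs \<subseteq> {1..K} \<and> length xs = d}"
    proof safe
      fix t x assume t: "t \<in> tuples d" "\<tau> \<le> Pt p t" and x: "x \<in> set t"
      have "\<tau> \<le> p x" using Pt_le_elem[OF t(1) x] t(2) by linarith
      hence "x \<le> K" using small[of x] by linarith
      thus "x \<in> {1..K}" using t x by (auto simp: tuples_def)
    next
      fix t assume "t \<in> tuples d" thus "length t = d" by (simp add: tuples_def)
    qed
    thus ?thesis by (rule finite_subset) (simp add: finite_lists_length_eq)
  qed
  obtain \<sigma>0 where s0: "bij_betw \<sigma>0 UNIV (tuples d)" "\<forall>n. Pt p (\<sigma>0 (Suc n)) \<le> Pt p (\<sigma>0 n)"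
    using decr_enum_exists[OF inf fin] Pt_pos by (force simp: tuples_def)
  define \<sigma> where "\<sigma> k = \<sigma>0 (k - 1)" for k
  define mu where "mu k = prod_list (map lam (\<sigma> k))" for k
  have b1: "bij_betw (\<lambda>k::nat. k - 1) {1..} UNIV"
    by (rule bij_betwI[where g = Suc]) auto
  have "bij_betw \<sigma> {1..} (tuples d)"
    unfolding \<sigma>_def using bij_betw_trans[OF b1 s0(1)] by (simp add: comp_def)
  moreover have "\<forall>k\<ge>1. mu (Suc k) \<le> mu k"
  proof safe
    fix k :: nat assume k: "1 \<le> k"
    have l: "length (\<sigma> j) = d" for j using s0(1) unfolding \<sigma>_def
      by (auto simp: bij_betw_def tuples_def)
    have "Pt p (\<sigma> (Suc k)) \<le> Pt p (\<sigma> k)" using s0(2)[rule_format, of "k - 1"] k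
      by (simp add: \<sigma>_def)
    thus "mu (Suc k) \<le> mu k" unfolding mu_def using prod_lam_eq[OF lamp] l Tpos
      by (simp add: mult_left_mono)
  qed
  ultimately have "is_decr_rearr lam d mu" unfolding is_decr_rearr_def mu_def by blast
  thus ?thesis unfolding tensor_eigs_def by (rule someI[where P = "is_decr_rearr lam d"])
qed

end

locale tensd = tens p lam T for p lam T +
  fixes d :: nat and \<sigma> :: "nat \<Rightarrow> nat list"
  assumes d1: "1 \<le> d" and bij: "bij_betw \<sigma> {1..} (tuples d)"
    and eig: "\<forall>k\<ge>1. tensor_eigs lam d k = prod_list (map lam (\<sigma> k))"
    and dec: "\<forall>k\<ge>1. tensor_eigs lam d (Suc k) \<le> tensor_eigs lam d k"
    and trT: "trace_ev lam = T"
begin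

definition q where "q k = tensor_eigs lam d k / T ^ d"

lemma len: "k \<ge> 1 \<Longrightarrow> length (\<sigma> k) = d"
  using bij by (auto simp: bij_betw_def tuples_def)

lemma q_eq: "k \<ge> 1 \<Longrightarrow> q k = Pt p (\<sigma> k)"
  unfolding q_def using eig prod_lam_eq[OF lamp] len Tpos by simp

lemma q_dec: "\<forall>k\<ge>1. q (Suc k) \<le> q k"
  unfolding q_def using dec Tpos by (simp add: divide_right_mono)

lemma q_nonneg: "0 \<le> q (Suc j)"
  using q_eq[of "Suc j"] Pt_pos[of "\<sigma> (Suc j)"] bij
  by (force simp: bij_betw_def tuples_def)

lemma part_eq: "(\<Sum>j<N. q (Suc j)) = sum (Pt p) (\<sigma> ` {1..N})"
proof -
  have "(\<Sum>j<N. q (Suc j)) = sum q {Suc 0..N}" by (simp add: sum.atLeast1_atMost_eq)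
  also have "\<dots> = sum (\<lambda>k. Pt p (\<sigma> k)) {1..N}" by (intro sum.cong) (auto simp: q_eq)
  also have "\<dots> = sum (Pt p) (\<sigma> ` {1..N})"
    using bij_betw_subset[OF bij, of "{1..N}"] by (subst sum.reindex) (auto simp: bij_betw_def)
  finally show ?thesis .
qed

lemma psum_eq: "sum p {1..K} = 1 - Rt p K"
  by (simp add: Rt_def sum.atLeast1_atMost_eq)

lemma box_sum: "sum (Pt p) {xs. set xs \<subseteq> {1..K} \<and> length xs = d} = (1 - Rt p K) ^ d"
  using sum_lists_prod[of "{1..K}" p d] psum_eq by (simp add: Pt_def[abs_def])

lemma box_sub: "{xs. set xs \<subseteq> {1..K} \<and> length xs = d} \<subseteq> tuples d"
  by (auto simp: tuples_def)

lemma Pt_nonneg: "t \<in> tuples d \<Longrightarrow> 0 \<le> Pt p t"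
  using Pt_pos[of t] by (simp add: tuples_def less_imp_le)

lemma finite_tuples_le1: 
  assumes "finite S" "S \<subseteq> tuples d"
  shows "sum (Pt p) S \<le> 1"
proof -
  have "finite (\<Union>(set ` S))" using assms by simp
  then obtain K where K: "\<forall>n\<in>\<Union>(set ` S). n \<le> K" by (auto simp: finite_nat_set_iff_bounded_le)
  have sub: "S \<subseteq> {xs. set xs \<subseteq> {1..K} \<and> length xs = d}"
    using K assms(2) by (auto simp: tuples_def)
  have "sum (Pt p) S \<le> sum (Pt p) {xs. set xs \<subseteq> {1..K} \<and> length xs = d}"
  proof (rule sum_mono2)
    show "0 \<le> Pt p b" if "b \<in> {xs. set xs \<subseteq> {1..K} \<and> length xs = d} - S" for b
      using that box_sub[of K] Pt_nonneg by blast
  qed (use sub in \<open>auto simp: finite_lists_length_eq\<close>)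
  also have "\<dots> = (1 - Rt p K) ^ d" by (rule box_sum)
  also have "\<dots> \<le> 1" using R_01[of K] by (intro power_le_one) auto
  finally show ?thesis .
qed

lemma part_le1: "(\<Sum>j<N. q (Suc j)) \<le> 1"
proof -
  have "\<sigma> ` {1..N} \<subseteq> tuples d" using bij unfolding bij_betw_def by auto
  thus ?thesis unfolding part_eq by (intro finite_tuples_le1) simp_all
qed

lemma part_ge:
  assumes "finite B" "B \<subseteq> tuples d"
  shows "\<exists>N. sum (Pt p) B \<le> (\<Sum>j<N. q (Suc j))"
proof -
  let ?I = "inv_into {1..} \<sigma> ` B"
  have "finite ?I" using assms by simp
  then obtain N where N: "\<forall>n\<in>?I. n \<le> N" by (auto simp: finite_nat_set_iff_bounded_le)
  have "B \<subseteq> \<sigma> ` {1..N}"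
  proof
    fix b assume b: "b \<in> B"
    hence b': "b \<in> \<sigma> ` {1..}" using assms bij by (auto simp: bij_betw_def)
    have "inv_into {1..} \<sigma> b \<in> {1..}" using b' by (rule inv_into_into)
    moreover have "inv_into {1..} \<sigma> b \<le> N" using N b by auto
    moreover have "\<sigma> (inv_into {1..} \<sigma> b) = b" using b' by (rule f_inv_into_f)
    ultimately show "b \<in> \<sigma> ` {1..N}" by (metis atLeastAtMost_iff atLeast_iff image_eqI)
  qed
  have "sum (Pt p) B \<le> sum (Pt p) (\<sigma> ` {1..N})"
  proof (rule sum_mono2)
    show "0 \<le> Pt p b" if "b \<in> \<sigma> ` {1..N} - B" for b
    proof -
      have "b \<in> tuples d" using that bij by (auto simp: bij_betw_def)
      thus ?thesis by (rule Pt_nonneg)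
    qed
  qed (use \<open>B \<subseteq> \<sigma> ` {1..N}\<close> in auto)
  thus ?thesis unfolding part_eq by blast
qed

lemma q_summable: "summable (\<lambda>j. q (Suc j))"
proof (rule bounded_imp_summable[where B = 1])
  fix n show "(\<Sum>k\<le>n. q (Suc k)) \<le> 1" using part_le1[of "Suc n"] by (simp add: lessThan_Suc_atMost)
qed (rule q_nonneg)

lemma q_total: "(\<Sum>j. q (Suc j)) = 1"
proof (rule antisym)
  show "(\<Sum>j. q (Suc j)) \<le> 1" using q_summable part_le1 by (rule suminf_le_const)
next
  have "(\<lambda>K. \<Sum>i<K. p (Suc i)) \<longlonglongrightarrow> 1" using psums by (simp add: sums_def)
  hence "(\<lambda>K. 1 - (\<Sum>i<K. p (Suc i))) \<longlonglongrightarrow> 1 - 1" by (intro tendsto_diff tendsto_const)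
  hence R0: "(\<lambda>K. Rt p K) \<longlonglongrightarrow> 0" by (simp add: Rt_def)
  have "(\<lambda>K. (1 - Rt p K) ^ d) \<longlonglongrightarrow> (1 - 0) ^ d"
    by (intro tendsto_intros R0)
  hence lim: "(\<lambda>K. (1 - Rt p K) ^ d) \<longlonglongrightarrow> 1" by simp
  have bnd: "(1 - Rt p K) ^ d \<le> (\<Sum>j. q (Suc j))" for K
  proof -
    obtain N where "(1 - Rt p K) ^ d \<le> (\<Sum>j<N. q (Suc j))"
      using part_ge[OF _ box_sub, of K] box_sum[of K] by (auto simp: finite_lists_length_eq)
    also have "\<dots> \<le> (\<Sum>j. q (Suc j))" using q_summable q_nonneg by (intro sum_le_suminf) auto
    finally show ?thesis .
  qed
  show "1 \<le> (\<Sum>j. q (Suc j))"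
    by (rule LIMSEQ_le_const2[OF lim]) (use bnd in auto)
qed

lemma tail_eq: "(\<Sum>j. q (Suc n + j)) = 1 - (\<Sum>j<n. q (Suc j))"
proof -
  have e: "(\<lambda>j. q (Suc (j + n))) = (\<lambda>j. q (Suc n + j))" by (simp add: add.commute)
  show ?thesis using suminf_split_initial_segment[OF q_summable, of n] q_total unfolding e by linarith
qed

lemma n_tensor_eq: "n_tensor lam d \<epsilon> = (LEAST n. 1 - (\<Sum>j<n. q (Suc j)) \<le> \<epsilon>\<^sup>2)"
  unfolding n_tensor_def trT q_def[symmetric] tail_eq ..

lemma n_upper:
  assumes m: "1 \<le> m" and h: "1 - \<epsilon>\<^sup>2 \<le> (1 - Rt p m) ^ d"
  shows "n_tensor lam d \<epsilon> \<le> m ^ d"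
proof -
  let ?B = "{xs. set xs \<subseteq> {1..m} \<and> length xs = d}"
  let ?I = "inv_into {1..} \<sigma> ` ?B"
  have Bsub: "?B \<subseteq> \<sigma> ` {1..}" using box_sub bij by (auto simp: bij_betw_def)
  have inj: "inj_on (inv_into {1..} \<sigma>) ?B" using Bsub by (rule inj_on_inv_into)
  have fB: "finite ?B" by (simp add: finite_lists_length_eq)
  have cI: "card ?I = m ^ d" using card_image[OF inj] card_lists_length_eq[of "{1..m}" d] by simp
  have Isub: "?I \<subseteq> {1..}"
  proof
    fix k assume "k \<in> ?I"
    then obtain b where b: "b \<in> ?B" "k = inv_into {1..} \<sigma> b" by blast
    have "b \<in> \<sigma> ` {1..}" using b Bsub by blast
    from inv_into_into[OF this] show "k \<in> {1..}" using b(2) by simp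
  qed
  have "sum q ?I = sum (\<lambda>b. q (inv_into {1..} \<sigma> b)) ?B" using inj by (simp add: sum.reindex)
  also have "\<dots> = sum (Pt p) ?B"
  proof (rule sum.cong)
    fix b assume b: "b \<in> ?B"
    hence "b \<in> \<sigma> ` {1..}" using Bsub by auto
    thus "q (inv_into {1..} \<sigma> b) = Pt p b"
      using q_eq[of "inv_into {1..} \<sigma> b"] inv_into_into[of b \<sigma> "{1..}"] f_inv_into_f[of b \<sigma> "{1..}"] by simp
  qed simp
  also have "\<dots> = (1 - Rt p m) ^ d" by (rule box_sum)
  finally have sI: "sum q ?I = (1 - Rt p m) ^ d" .
  have "sum q ?I \<le> sum q {1..m ^ d}" using topN[OF q_dec _ Isub cI] fB by simp
  also have "\<dots> = (\<Sum>j<m ^ d. q (Suc j))" by (simp add: sum.atLeast1_atMost_eq)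
  finally have "1 - (\<Sum>j<m ^ d. q (Suc j)) \<le> \<epsilon>\<^sup>2" using sI h by linarith
  thus ?thesis unfolding n_tensor_eq by (rule Least_le)
qed

lemma n_lower:
  assumes e: "0 < \<epsilon>" and m: "1 \<le> m"
  shows "1 - \<epsilon>\<^sup>2 \<le> (1 - Rt p (m - 1)) ^ d + real (n_tensor lam d \<epsilon>) * p m"
proof -
  have "(\<lambda>n. \<Sum>j<n. q (Suc j)) \<longlonglongrightarrow> 1" using summable_LIMSEQ[OF q_summable] q_total by simp
  hence "(\<lambda>n. 1 - (\<Sum>j<n. q (Suc j))) \<longlonglongrightarrow> 1 - 1" by (intro tendsto_diff tendsto_const)
  hence "eventually (\<lambda>n. 1 - (\<Sum>j<n. q (Suc j)) < \<epsilon>\<^sup>2) sequentially"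
    using e by (intro order_tendstoD(2)) auto
  then obtain n0 where "\<forall>n\<ge>n0. 1 - (\<Sum>j<n. q (Suc j)) < \<epsilon>\<^sup>2"
    unfolding eventually_sequentially by blast
  hence "1 - (\<Sum>j<n0. q (Suc j)) \<le> \<epsilon>\<^sup>2" by (simp add: less_imp_le)
  hence ex: "\<exists>n. 1 - (\<Sum>j<n. q (Suc j)) \<le> \<epsilon>\<^sup>2" by blast
  define n where "n = n_tensor lam d \<epsilon>"
  have pn: "1 - \<epsilon>\<^sup>2 \<le> (\<Sum>j<n. q (Suc j))"
    using LeastI_ex[OF ex] unfolding n_def n_tensor_eq by linarith
  let ?B = "{xs. set xs \<subseteq> {1..m - 1} \<and> length xs = d}"
  define I1 where "I1 = {k\<in>{1..n}. \<sigma> k \<in> ?B}"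
  define I2 where "I2 = {k\<in>{1..n}. \<sigma> k \<notin> ?B}"
  have split: "(\<Sum>j<n. q (Suc j)) = sum q I1 + sum q I2"
  proof -
    have "(\<Sum>j<n. q (Suc j)) = sum q {1..n}" by (simp add: sum.atLeast1_atMost_eq)
    also have "{1..n} = I1 \<union> I2" by (auto simp: I1_def I2_def)
    also have "sum q (I1 \<union> I2) = sum q I1 + sum q I2"
      by (rule sum.union_disjoint) (auto simp: I1_def I2_def)
    finally show ?thesis .
  qed
  have injs: "inj_on \<sigma> {1..}" using bij by (simp add: bij_betw_def)
  have s1: "sum q I1 \<le> (1 - Rt p (m - 1)) ^ d"
  proof -
    have "sum q I1 = sum (\<lambda>k. Pt p (\<sigma> k)) I1" by (intro sum.cong) (auto simp: I1_def q_eq)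
    also have "\<dots> = sum (Pt p) (\<sigma> ` I1)"
      using inj_on_subset[OF injs, of I1] by (subst sum.reindex) (auto simp: I1_def)
    also have "\<dots> \<le> sum (Pt p) ?B"
    proof (rule sum_mono2)
      show "0 \<le> Pt p b" if "b \<in> ?B - \<sigma> ` I1" for b
        using that box_sub[of "m - 1"] Pt_nonneg by blast
    qed (auto simp: I1_def finite_lists_length_eq)
    also have "\<dots> = (1 - Rt p (m - 1)) ^ d" by (rule box_sum)
    finally show ?thesis .
  qed
  have s2: "sum q I2 \<le> real n * p m"
  proof -
    have "\<forall>k\<in>I2. q k \<le> p m"
    proof
      fix k assume k: "k \<in> I2"
      hence k1: "1 \<le> k" and nB: "\<sigma> k \<notin> ?B" by (auto simp: I2_def)
      have tk: "\<sigma> k \<in> tuples d" using bij k1 by (auto simp: bij_betw_def)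
      then obtain j where j: "j \<in> set (\<sigma> k)" "\<not> j \<le> m - 1"
      proof -
        have "\<not> set (\<sigma> k) \<subseteq> {1..m - 1}" using nB tk by (auto simp: tuples_def)
        then obtain j where "j \<in> set (\<sigma> k)" "j \<notin> {1..m - 1}" by blast
        moreover have "1 \<le> j" using tk \<open>j \<in> set (\<sigma> k)\<close> by (auto simp: tuples_def)
        ultimately show ?thesis using that by auto
      qed
      have "q k = Pt p (\<sigma> k)" using q_eq k1 by simp
      also have "\<dots> \<le> p j" using Pt_le_elem[OF tk j(1)] .
      also have "\<dots> \<le> p m" using mono_from[OF pdec m] j by simp
      finally show "q k \<le> p m" .
    qed
    hence "sum q I2 \<le> real (card I2) * p m" using sum_bounded_above[of I2 q "p m"] by simp
    also have "\<dots> \<le> real n * p m"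
    proof -
      have "card I2 \<le> card {1..n}" by (rule card_mono) (auto simp: I2_def)
      thus ?thesis using ppos m by (intro mult_right_mono) (auto simp: less_imp_le)
    qed
    finally show ?thesis .
  qed
  show ?thesis using pn split s1 s2 unfolding n_def by linarith
qed

end




lemma my_powr_at_top:
  assumes "(p::real) > 0"
  shows "filterlim (\<lambda>x. x powr p) at_top at_top"
proof (subst filterlim_cong[OF refl refl])
  show "LIM x at_top. exp (p * ln x) :> at_top"
    by (rule filterlim_compose[OF exp_at_top filterlim_tendsto_pos_mult_at_top[OF tendsto_const]])
       (simp_all add: ln_at_top assms)
  show "eventually (\<lambda>x. x powr p = exp (p * ln x)) at_top"
    using eventually_gt_at_top[of 0] by eventually_elim (simp add: powr_def)
qed

lemma ln2_le1: "ln (2::real) \<le> 1"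
proof -
  have "(2::real) \<le> exp 1" using exp_ge_add_one_self[of 1] by simp
  hence "ln (2::real) \<le> ln (exp 1)" by (subst ln_le_cancel_iff) auto
  thus ?thesis by simp
qed

lemma H1:
  assumes y: "0 \<le> y" and m: "m = nat \<lceil>exp (exp y)\<rceil>"
  shows "y \<le> ln (ln (real m))" "ln (ln (real m)) \<le> y + ln 2" "exp (exp y) \<le> real m"
proof -
  let ?x = "exp (exp y)"
  have x1: "1 \<le> ?x" using y by simp
  have c0: "0 \<le> \<lceil>?x\<rceil>" using x1 by linarith
  have rm: "real m = of_int \<lceil>?x\<rceil>" using m c0 by simp
  have mx: "?x \<le> real m" using rm by linarith
  have mx2: "real m \<le> ?x + 1" using rm by linarith
  have m0: "0 < real m" using mx x1 by linarith
  have lm: "exp y \<le> ln (real m)" using mx m0 by (subst ln_ge_iff) auto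
  have lm0: "0 < ln (real m)" using lm exp_gt_zero[of y] by linarith
  show "y \<le> ln (ln (real m))" using lm lm0 by (subst ln_ge_iff) auto
  have "real m \<le> 2 * ?x" using mx2 x1 by linarith
  hence "ln (real m) \<le> ln (2 * ?x)" using m0 by (subst ln_le_cancel_iff) auto
  also have "\<dots> = ln 2 + exp y" by (simp add: ln_mult)
  also have "\<dots> \<le> 2 * exp y" using ln2_le1 y by (smt (verit) one_le_exp_iff)
  finally have "ln (ln (real m)) \<le> ln (2 * exp y)" using lm0 by (subst ln_le_cancel_iff) auto
  also have "\<dots> = ln 2 + y" by (simp add: ln_mult)
  finally show "ln (ln (real m)) \<le> y + ln 2" by simp
  show "exp (exp y) \<le> real m" by (rule mx)
qed

lemma H2:
  assumes y: "0 \<le> y" and x2: "2 \<le> exp (exp y)" and m: "m = nat \<lfloor>exp (exp y)\<rfloor>"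
  shows "ln (ln (real m)) \<le> y" "exp (exp y) / 2 \<le> real m" "exp (exp y) - 1 \<le> real m"
    "real m \<le> exp (exp y)"
proof -
  let ?x = "exp (exp y)"
  have f2: "2 \<le> \<lfloor>?x\<rfloor>" using x2 by (simp add: le_floor_iff)
  have rm: "real m = of_int \<lfloor>?x\<rfloor>" using m f2 by simp
  have a: "?x - 1 \<le> real m" "real m \<le> ?x" using rm by linarith+
  show "?x - 1 \<le> real m" "real m \<le> ?x" using a by auto
  show "?x / 2 \<le> real m" using a x2 by linarith
  have m2: "2 \<le> real m" using rm f2 by linarith
  have "ln (real m) \<le> ln ?x" using a m2 by (subst ln_le_cancel_iff) auto
  hence "ln (real m) \<le> exp y" by simp
  moreover have "0 < ln (real m)" using m2 by simp
  ultimately have "ln (ln (real m)) \<le> ln (exp y)" by (subst ln_le_cancel_iff) auto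
  thus "ln (ln (real m)) \<le> y" by simp
qed

lemma H3:
  assumes k: "0 < \<kappa>" and m: "exp (exp y) / 2 \<le> real m"
    and ey: "2 * (ln 2 - ln \<kappa>) \<le> exp y" and n: "\<kappa> * real m \<le> real n"
  shows "1 < real n" "y - ln 2 \<le> ln (ln (real n))"
proof -
  have "0 < exp (exp y) / 2" by simp
  hence m0: "0 < real m" using m by linarith
  have "ln (exp (exp y) / 2) \<le> ln (real m)" using m m0 by (subst ln_le_cancel_iff) auto
  hence lm: "exp y - ln 2 \<le> ln (real m)" by (simp add: ln_div)
  have n0: "0 < real n" using n k m0 by (smt (verit) mult_pos_pos)
  have "ln (\<kappa> * real m) \<le> ln (real n)" using n k m0 n0 by (subst ln_le_cancel_iff) auto
  hence ln1: "ln \<kappa> + ln (real m) \<le> ln (real n)" using k m0 by (simp add: ln_mult)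
  hence ln2: "exp y / 2 \<le> ln (real n)" using lm ey ln1 by argo
  have p: "0 < exp y / 2" by simp
  hence lnp: "0 < ln (real n)" using ln2 by linarith
  thus "1 < real n" using n0 by simp
  have "ln (exp y / 2) \<le> ln (ln (real n))" using ln2 p lnp by (subst ln_le_cancel_iff) auto
  thus "y - ln 2 \<le> ln (ln (real n))" by (simp add: ln_div)
qed

lemma H4:
  fixes a Lc s d :: real
  assumes "0 < a" "0 < Lc" "0 < s" "0 < d"
  shows "(a * (Lc * d) powr (1 / s)) powr s = a powr s * Lc * d"
proof -
  have "(a * (Lc * d) powr (1 / s)) powr s = a powr s * ((Lc * d) powr (1 / s)) powr s"
    by (rule powr_mult)
  also have "((Lc * d) powr (1 / s)) powr s = Lc * d" using assms by (simp add: powr_powr)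
  finally show ?thesis by simp
qed

lemma Fq_le:
  assumes s: "0 < s" and y: "0 < y" and z: "y \<le> ln (ln x)"
  shows "Fq s x \<le> y powr (- s) / s"
  unfolding Fq_def using powr_mono2'[of "-s" y "ln (ln x)"] s y z by (intro divide_right_mono) auto

lemma Fq_ge:
  assumes s: "0 < s" and z: "0 < ln (ln x)" and y: "ln (ln x) \<le> y"
  shows "y powr (- s) / s \<le> Fq s x"
  unfolding Fq_def using powr_mono2'[of "-s" "ln (ln x)" y] s y z by (intro divide_right_mono) auto




theorem proposition11:
  fixes lam :: "nat \<Rightarrow> real" and \<beta> s :: real
  assumes nonneg: "\<forall>k\<ge>1. 0 \<le> lam k"
    and noninc: "\<forall>k\<ge>1. lam (Suc k) \<le> lam k"
    and summ: "summable (\<lambda>k. lam (Suc k))"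
    and pos1: "lam 1 > 0"
    and beta: "\<beta> > 0" and s: "s > 0"
    and asym: "(\<lambda>k. lam k / trace_ev lam) \<sim>[at_top]
               (\<lambda>k. \<beta> / (real k * ln (real k) * ln (ln (real k)) powr (1 + s)))"
  shows "\<forall>\<epsilon>. 0 < \<epsilon> \<and> \<epsilon> < 1 \<longrightarrow>
    (\<lambda>d. ln (ln (real (n_tensor lam d \<epsilon>)))) \<sim>[at_top]
    (\<lambda>d. (\<beta> * real d / (s * \<bar>ln (1 - \<epsilon>\<^sup>2)\<bar>)) powr (1 / s))"
proof (intro allI impI)
  fix \<epsilon> :: real assume eps: "0 < \<epsilon> \<and> \<epsilon> < 1"
  define T where "T = trace_ev lam"
  have lam_sums: "(\<lambda>k. lam (Suc k)) sums T" using summ by (simp add: T_def trace_ev_def summable_sums)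
  have Tpos: "0 < T"
  proof -
    have "(\<Sum>k<1. lam (Suc k)) \<le> T"
      using sum_le_suminf[OF summ, of "{..<1}"] nonneg by (auto simp: T_def trace_ev_def)
    thus ?thesis using pos1 by simp
  qed
  define p where "p k = lam k / T" for k
  have gdef: "(\<lambda>k::nat. \<beta> / (real k * ln (real k) * ln (ln (real k)) powr (1 + s))) = (\<lambda>k. \<beta> * gq s (real k))"
    by (simp add: gq_def fun_eq_iff)
  have asym': "p \<sim>[at_top] (\<lambda>k. \<beta> * gq s (real k))"
    using asym unfolding gdef T_def[symmetric] p_def[abs_def] .
  have ev_pos: "eventually (\<lambda>k. p k > 0) at_top"
  proof -
    have "eventually (\<lambda>k::nat. 0 < \<beta> * gq s (real k)) at_top"
      using eventually_ge_at_top[of "4::nat"] by eventually_elim (use beta gq_pos in auto)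
    with asymp_equiv_eventually_pos_iff[OF asym'] show ?thesis by eventually_elim auto
  qed
  have pdec: "\<forall>k\<ge>1. p (Suc k) \<le> p k" using noninc Tpos by (simp add: p_def divide_right_mono)
  have ppos: "\<forall>k\<ge>1. 0 < p k"
  proof safe
    fix k :: nat assume k: "1 \<le> k"
    obtain K where K: "\<forall>j\<ge>K. 0 < p j" using ev_pos unfolding eventually_at_top_linorder by blast
    have "p (max k K) \<le> p k" using mono_from[OF pdec k, of "max k K"] by simp
    moreover have "0 < p (max k K)" using K by simp
    ultimately show "0 < p k" by linarith
  qed
  have psums: "(\<lambda>k. p (Suc k)) sums 1" using sums_divide[OF lam_sums, of T] Tpos by (simp add: p_def)
  interpret P: tens p lam T
    by unfold_locales (use ppos pdec psums Tpos in \<open>auto simp: p_def\<close>)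
  have tensd_ex: "\<exists>\<sigma>. tensd p lam T d \<sigma>" if d: "1 \<le> d" for d
  proof -
    from P.rearr_exists[OF d] obtain \<sigma> where
      "bij_betw \<sigma> {1..} (tuples d)" "\<forall>k\<ge>1. tensor_eigs lam d k = prod_list (map lam (\<sigma> k))"
      "\<forall>k\<ge>1. tensor_eigs lam d (Suc k) \<le> tensor_eigs lam d k"
      unfolding is_decr_rearr_def by blast
    thus ?thesis unfolding tensd_def tensd_axioms_def using P.tens_axioms d by (auto simp: T_def)
  qed
  define N where "N d = n_tensor lam d \<epsilon>" for d
  have UB: "N d \<le> m ^ d" if "1 \<le> d" "1 \<le> m" "1 - \<epsilon>\<^sup>2 \<le> (1 - Rt p m) ^ d" for d m
    using tensd_ex[OF that(1)] tensd.n_upper that unfolding N_def by metis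
  have LB: "1 - \<epsilon>\<^sup>2 \<le> (1 - Rt p (m - 1)) ^ d + real (N d) * p m" if "1 \<le> d" "1 \<le> m" for d m
    using tensd_ex[OF that(1)] tensd.n_lower that eps unfolding N_def by metis
  have bounds: "\<exists>M\<ge>4. \<forall>k\<ge>M. (1 - \<delta>) * \<beta> * gq s (real k) \<le> p k \<and> p k \<le> (1 + \<delta>) * \<beta> * gq s (real k)"
    if \<delta>: "0 < \<delta>" for \<delta>
  proof -
    have lim: "((\<lambda>k. if p k = 0 \<and> \<beta> * gq s (real k) = 0 then 1 else p k / (\<beta> * gq s (real k))) \<longlongrightarrow> 1) at_top"
      using asymp_equivD[OF asym'] .
    have e1: "eventually (\<lambda>k. 1 - \<delta> < (if p k = 0 \<and> \<beta> * gq s (real k) = 0 then 1 else p k / (\<beta> * gq s (real k)))) at_top"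
      using order_tendstoD(1)[OF lim] \<delta> by simp
    have e2: "eventually (\<lambda>k. (if p k = 0 \<and> \<beta> * gq s (real k) = 0 then 1 else p k / (\<beta> * gq s (real k))) < 1 + \<delta>) at_top"
      using order_tendstoD(2)[OF lim] \<delta> by simp
    have "eventually (\<lambda>k. (1 - \<delta>) * \<beta> * gq s (real k) \<le> p k \<and> p k \<le> (1 + \<delta>) * \<beta> * gq s (real k)) at_top"
      using e1 e2 eventually_ge_at_top[of "4::nat"]
    proof eventually_elim
      case (elim k)
      have g: "0 < \<beta> * gq s (real k)" using gq_pos[of "real k" s] beta elim(3) by simp
      hence r1: "1 - \<delta> < p k / (\<beta> * gq s (real k))" and r2: "p k / (\<beta> * gq s (real k)) < 1 + \<delta>"
      proof -
        have "\<beta> \<noteq> 0" "gq s (real k) \<noteq> 0" using g by auto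
        thus "1 - \<delta> < p k / (\<beta> * gq s (real k))" "p k / (\<beta> * gq s (real k)) < 1 + \<delta>"
          using elim(1,2) by auto
      qed
      have "(1 - \<delta>) * (\<beta> * gq s (real k)) \<le> p k" using r1 g by (simp add: less_divide_eq less_imp_le)
      moreover have "p k \<le> (1 + \<delta>) * (\<beta> * gq s (real k))" using r2 g by (simp add: divide_less_eq less_imp_le)
      ultimately show ?case by (simp add: mult.assoc)
    qed
    then obtain M where M: "\<forall>k\<ge>M. (1 - \<delta>) * \<beta> * gq s (real k) \<le> p k \<and> p k \<le> (1 + \<delta>) * \<beta> * gq s (real k)"
      unfolding eventually_at_top_linorder by blast
    show ?thesis by (rule exI[of _ "max M 4"]) (use M in auto)
  qed
  define c where "c = - ln (1 - \<epsilon>\<^sup>2)"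
  have e2: "0 < 1 - \<epsilon>\<^sup>2" "1 - \<epsilon>\<^sup>2 < 1"
  proof -
    have "\<epsilon>\<^sup>2 < 1" using eps by (simp add: power_less_one_iff abs_less_iff)
    moreover have "0 < \<epsilon>\<^sup>2" using eps by simp
    ultimately show "0 < 1 - \<epsilon>\<^sup>2" "1 - \<epsilon>\<^sup>2 < 1" by auto
  qed
  have cpos: "0 < c" using e2 by (simp add: c_def ln_less_zero)
  have expc: "exp (- c) = 1 - \<epsilon>\<^sup>2" using e2 by (simp add: c_def)
  define Lc where "Lc = \<beta> / (s * c)"
  have Lcpos: "0 < Lc" using beta s cpos by (simp add: Lc_def)
  have cLc: "\<beta> / (s * Lc) = c" using beta s cpos by (simp add: Lc_def field_simps)
  define L where "L d = (Lc * real d) powr (1 / s)" for d :: nat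
  have rhs: "(\<lambda>d. (\<beta> * real d / (s * \<bar>ln (1 - \<epsilon>\<^sup>2)\<bar>)) powr (1 / s)) = L"
  proof
    fix d :: nat
    have "\<bar>ln (1 - \<epsilon>\<^sup>2)\<bar> = c" using e2 by (simp add: c_def ln_less_zero less_imp_le)
    thus "(\<beta> * real d / (s * \<bar>ln (1 - \<epsilon>\<^sup>2)\<bar>)) powr (1 / s) = L d"
      by (simp add: L_def Lc_def)
  qed
  have Ltop: "filterlim L at_top sequentially"
  proof -
    have "filterlim (\<lambda>d::nat. Lc * real d) at_top sequentially"
      by (rule filterlim_tendsto_pos_mult_at_top[OF tendsto_const Lcpos filterlim_real_sequentially])
    moreover have "0 < 1 / s" using s by simp
    ultimately show ?thesis unfolding L_def[abs_def] by (rule filterlim_compose[OF my_powr_at_top, rotated])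
  qed
  have Lpos: "0 < L d" if "1 \<le> d" for d using that Lcpos by (simp add: L_def)
  have Lpow: "(a * L d) powr s = a powr s * Lc * real d" if "1 \<le> d" "0 < a" for a d
    unfolding L_def using H4[of a Lc s "real d"] that Lcpos s by simp
  have evL: "eventually (\<lambda>d. K \<le> L d) sequentially" for K
    using Ltop by (simp add: filterlim_at_top)
  have ypow: "y powr (- s) = 1 / (a powr s * Lc * real d)" if "y = a * L d" "1 \<le> d" "0 < a" for a d y
    using Lpow[OF that(2,3)] that(1) by (simp add: powr_minus divide_inverse)
  have LBev: "eventually (\<lambda>d. 1 < real (N d) \<and> (1 - \<eta>) * L d - ln 2 \<le> ln (ln (real (N d)))) sequentially"
    if \<eta>: "0 < \<eta>" "\<eta> < 1" for \<eta>
  proof -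
    define \<delta> where "\<delta> = (1 - (1 - \<eta>) powr s) / 2"
    have pw: "(1 - \<eta>) powr s < 1" using powr_less_mono2[of s "1 - \<eta>" 1] \<eta> s by simp
    have pw0: "0 < (1 - \<eta>) powr s" using \<eta> by simp
    have \<delta>1: "0 < \<delta>" using pw unfolding \<delta>_def by argo
    have \<delta>2: "\<delta> < 1" using pw0 unfolding \<delta>_def by argo
    note \<delta> = \<delta>1 \<delta>2
    define \<rho> where "\<rho> = (1 - \<delta>) / (1 - \<eta>) powr s"
    have \<rho>: "1 < \<rho>" using pw pw0 by (simp add: \<rho>_def \<delta>_def field_simps)
    define \<kappa> where "\<kappa> = exp (- c) - exp (- (\<rho> * c))"
    have \<kappa>: "0 < \<kappa>" using \<rho> cpos by (simp add: \<kappa>_def)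
    obtain M where M: "4 \<le> M" "\<forall>k\<ge>M. (1 - \<delta>) * \<beta> * gq s (real k) \<le> p k"
      using bounds[OF \<delta>(1)] by blast
    have tl: "(1 - \<delta>) * \<beta> * Fq s (real (Suc m)) \<le> Rt p m" if "M \<le> m" for m
      using P.tail_lower[OF s M(1) _ M(2) that] \<delta> beta by simp
    define Y0 where "Y0 = ln (real M + 4 + 2 * \<bar>ln \<kappa>\<bar>)"
    have "eventually (\<lambda>d. Y0 / (1 - \<eta>) \<le> L d) sequentially" by (rule evL)
    moreover have "eventually (\<lambda>d. 1 \<le> d) sequentially" by (rule eventually_ge_at_top)
    ultimately show ?thesis
    proof eventually_elim
      case (elim d)
      define y where "y = (1 - \<eta>) * L d"
      have y0: "Y0 \<le> y" using elim(1) \<eta> by (simp add: y_def field_simps)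
      have eY: "real M + 4 + 2 * \<bar>ln \<kappa>\<bar> \<le> exp y"
      proof -
        have "exp Y0 = real M + 4 + 2 * \<bar>ln \<kappa>\<bar>" unfolding Y0_def by (subst exp_ln) auto
        thus ?thesis using y0 by (metis exp_le_cancel_iff)
      qed
      have ypos: "0 < y" using Lpos[OF elim(2)] \<eta> by (simp add: y_def)
      have xx: "1 + exp y \<le> exp (exp y)" by (rule exp_ge_add_one_self)
      have x2: "2 \<le> exp (exp y)" using xx eY by linarith
      define m where "m = nat \<lfloor>exp (exp y)\<rfloor>"
      note h2 = H2[OF less_imp_le[OF ypos] x2 m_def]
      have mM: "real M + 4 \<le> real m" using h2(3) xx eY by linarith
      hence mM': "M + 1 \<le> m" "1 \<le> m" "4 \<le> real m" using M(1) by linarith+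
      have tlm: "(1 - \<delta>) * \<beta> * Fq s (real m) \<le> Rt p (m - 1)"
        using tl[of "m - 1"] mM' by simp
      have lnlnpos: "0 < ln (ln (real m))" using ln_ln_pos[OF mM'(3)] by simp
      have Fge: "y powr (- s) / s \<le> Fq s (real m)" by (rule Fq_ge[OF s lnlnpos h2(1)])
      have yp: "y powr (- s) = 1 / ((1 - \<eta>) powr s * Lc * real d)"
        by (rule ypow[OF y_def elim(2)]) (use \<eta> in simp)
      have "\<rho> * c / real d = (1 - \<delta>) * \<beta> * (y powr (- s) / s)"
        unfolding yp \<rho>_def cLc[symmetric] using s Lcpos pw0 elim(2) by (simp add: field_simps)
      also have "\<dots> \<le> (1 - \<delta>) * \<beta> * Fq s (real m)"
        using Fge \<delta> beta by (intro mult_left_mono) auto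
      also have "\<dots> \<le> Rt p (m - 1)" by (rule tlm)
      finally have "\<rho> * c / real d \<le> Rt p (m - 1)" .
      hence dR: "\<rho> * c \<le> real d * Rt p (m - 1)" using elim(2) by (simp add: field_simps)
      have "(1 - Rt p (m - 1)) ^ d \<le> exp (- Rt p (m - 1)) ^ d"
        using P.R_01[of "m - 1"] exp_ge_add_one_self[of "- Rt p (m - 1)"] by (intro power_mono) auto
      also have "\<dots> = exp (real d * (- Rt p (m - 1)))" by (rule exp_of_nat_mult[symmetric])
      also have "\<dots> \<le> exp (- (\<rho> * c))" using dR by simp
      finally have pR: "(1 - Rt p (m - 1)) ^ d \<le> exp (- (\<rho> * c))" .
      have "\<kappa> \<le> real (N d) * p m" using LB[OF elim(2) mM'(2)] pR expc by (simp add: \<kappa>_def)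
      also have "\<dots> \<le> real (N d) * (1 / real m)"
        using P.p_le_inv[OF mM'(2)] by (intro mult_left_mono) auto
      finally have "\<kappa> * real m \<le> real (N d)" using mM' by (simp add: field_simps)
      moreover have "2 * (ln 2 - ln \<kappa>) \<le> exp y" using eY ln2_le1 abs_ge_minus_self[of "ln \<kappa>"] of_nat_0_le_iff[of M, where ?'a=real] by argo
      ultimately have "1 < real (N d)" "y - ln 2 \<le> ln (ln (real (N d)))"
        using H3[OF \<kappa> h2(2)] by auto
      thus ?case by (simp add: y_def)
    qed
  qed
  have UBev: "eventually (\<lambda>d. 1 < real (N d) \<longrightarrow> ln (ln (real (N d))) \<le> (1 + \<eta>) * L d + ln (real d) + ln 2) sequentially"
    if \<eta>: "0 < \<eta>" for \<eta>
  proof -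
    define \<delta> where "\<delta> = ((1 + \<eta>) powr s - 1) / 2"
    have pw: "1 < (1 + \<eta>) powr s" using powr_less_mono2[of s 1 "1 + \<eta>"] \<eta> s by simp
    have \<delta>: "0 < \<delta>" using pw by (auto simp: \<delta>_def)
    define \<rho> where "\<rho> = (1 + \<delta>) / (1 + \<eta>) powr s"
    have gen: "(1 + (a - 1) / 2) / a < 1 \<and> 0 < (1 + (a - 1) / 2) / a" if "1 < a" for a :: real
      using that by (auto simp: field_simps)
    have \<rho>: "\<rho> < 1" "0 < \<rho>" using gen[OF pw] by (simp_all add: \<rho>_def \<delta>_def)
    obtain M where M: "4 \<le> M" "\<forall>k\<ge>M. p k \<le> (1 + \<delta>) * \<beta> * gq s (real k)"
      using bounds[OF \<delta>] by blast
    have tu: "Rt p m \<le> (1 + \<delta>) * \<beta> * Fq s (real m)" if "M \<le> m" for m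
      using P.tail_upper[OF s M(1) _ M(2) that] \<delta> beta by simp
    have lim: "(\<lambda>n. (1 + (- (\<rho> * c)) / real n) ^ n) \<longlonglongrightarrow> exp (- (\<rho> * c))"
      by (rule tendsto_exp_limit_sequentially)
    have "exp (- c) < exp (- (\<rho> * c))" using \<rho> cpos by simp
    hence "eventually (\<lambda>n. exp (- c) < (1 + (- (\<rho> * c)) / real n) ^ n) sequentially"
      by (rule order_tendstoD(1)[OF lim])
    moreover have "eventually (\<lambda>d. ln (real M + 1) / (1 + \<eta>) \<le> L d) sequentially" by (rule evL)
    moreover have "eventually (\<lambda>d. nat \<lceil>\<rho> * c\<rceil> + 1 \<le> d) sequentially" by (rule eventually_ge_at_top)
    ultimately show ?thesis
    proof eventually_elim
      case (elim d)
      have d1: "1 \<le> d" using elim(3) by simp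
      have dc: "\<rho> * c \<le> real d" using elim(3) by linarith
      define y where "y = (1 + \<eta>) * L d"
      have y0: "ln (real M + 1) \<le> y" using elim(2) \<eta> by (simp add: y_def field_simps)
      have ypos: "0 < y" using Lpos[OF d1] \<eta> by (simp add: y_def)
      define m where "m = nat \<lceil>exp (exp y)\<rceil>"
      note h1 = H1[OF less_imp_le[OF ypos] m_def]
      have eY: "real M + 1 \<le> exp y"
      proof -
        have "exp (ln (real M + 1)) = real M + 1" by (subst exp_ln) auto
        thus ?thesis using y0 by (metis exp_le_cancel_iff)
      qed
      have xx: "1 + exp y \<le> exp (exp y)" by (rule exp_ge_add_one_self)
      have mM: "M \<le> m" "1 \<le> m" using h1(3) xx eY M(1) by linarith+
      have yp: "y powr (- s) = 1 / ((1 + \<eta>) powr s * Lc * real d)"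
        by (rule ypow[OF y_def d1]) (use \<eta> in simp)
      have "Rt p m \<le> (1 + \<delta>) * \<beta> * Fq s (real m)" by (rule tu[OF mM(1)])
      also have "\<dots> \<le> (1 + \<delta>) * \<beta> * (y powr (- s) / s)"
        using Fq_le[OF s ypos h1(1)] \<delta> beta by (intro mult_left_mono) auto
      also have "\<dots> = \<rho> * c / real d"
        unfolding yp \<rho>_def cLc[symmetric] using s Lcpos pw d1 by (simp add: field_simps)
      finally have Rm: "Rt p m \<le> \<rho> * c / real d" .
      have "exp (- c) \<le> (1 + (- (\<rho> * c)) / real d) ^ d" using elim(1) by simp
      also have "\<dots> \<le> (1 - Rt p m) ^ d"
      proof (rule power_mono)
        show "0 \<le> 1 + - (\<rho> * c) / real d" using dc d1 by (simp add: field_simps)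
        show "1 + - (\<rho> * c) / real d \<le> 1 - Rt p m" using Rm by simp
      qed
      finally have "1 - \<epsilon>\<^sup>2 \<le> (1 - Rt p m) ^ d" using expc by simp
      hence Nm: "N d \<le> m ^ d" by (rule UB[OF d1 mM(2)])
      show ?case
      proof
        assume N1: "1 < real (N d)"
        have m0: "0 < real m" using mM by simp
        have "1 < exp (exp y)" using ypos by simp
        hence "1 < real m" using h1(3) by linarith
        hence lm: "0 < ln (real m)" by simp
        have "ln (real (N d)) \<le> ln (real (m ^ d))" using Nm N1 m0 by (subst ln_le_cancel_iff) auto
        also have "\<dots> = real d * ln (real m)" by (simp add: ln_realpow)
        finally have "ln (ln (real (N d))) \<le> ln (real d * ln (real m))"
          using N1 lm d1 by (subst ln_le_cancel_iff) auto
        also have "\<dots> = ln (real d) + ln (ln (real m))" using lm d1 by (simp add: ln_mult)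
        also have "\<dots> \<le> ln (real d) + y + ln 2" using h1(2) by simp
        finally show "ln (ln (real (N d))) \<le> (1 + \<eta>) * L d + ln (real d) + ln 2" by (simp add: y_def)
      qed
    qed
  qed
  have err1: "(\<lambda>d. ln 2 / L d) \<longlonglongrightarrow> 0"
    by (rule tendsto_divide_0[OF tendsto_const filterlim_at_top_imp_at_infinity[OF Ltop]])
  have err2: "(\<lambda>d. ln (real d) / L d) \<longlonglongrightarrow> 0"
  proof -
    have "(\<lambda>d. (ln (real d) / real d powr (1 / s)) / Lc powr (1 / s)) \<longlonglongrightarrow> 0 / Lc powr (1 / s)"
      using lim_ln_over_power[of "1 / s"] s Lcpos by (intro tendsto_divide) auto
    moreover have eq1: "(ln (real d) / real d powr (1 / s)) / Lc powr (1 / s) = ln (real d) / L d" for d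
      unfolding L_def by (simp add: powr_mult mult.commute)
    have eq: "(\<lambda>d. (ln (real d) / real d powr (1 / s)) / Lc powr (1 / s)) = (\<lambda>d. ln (real d) / L d)"
      by (rule ext) (rule eq1)
    ultimately show ?thesis unfolding eq by simp
  qed
  have lim: "(\<lambda>d. ln (ln (real (N d))) / L d) \<longlonglongrightarrow> 1"
  proof (rule tendstoI)
    fix e :: real assume e: "0 < e"
    define \<eta> where "\<eta> = min (e / 4) (1 / 2)"
    have \<eta>: "0 < \<eta>" "\<eta> < 1" "\<eta> \<le> e / 4" using e by (auto simp: \<eta>_def)
    have a1: "eventually (\<lambda>d. dist (ln 2 / L d) 0 < e / 4) sequentially"
      by (rule tendstoD[OF err1]) (use e in simp)
    have a2: "eventually (\<lambda>d. dist (ln (real d) / L d) 0 < e / 4) sequentially"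
      by (rule tendstoD[OF err2]) (use e in simp)
    from a1 a2 LBev[OF \<eta>(1,2)] UBev[OF \<eta>(1)] eventually_ge_at_top[of "1::nat"]
    show "eventually (\<lambda>d. dist (ln (ln (real (N d))) / L d) 1 < e) sequentially"
    proof eventually_elim
      case (elim d)
      have Lp: "0 < L d" using Lpos elim(5) by simp
      have lo: "(1 - \<eta>) * L d - ln 2 \<le> ln (ln (real (N d)))" using elim(3) by simp
      have up: "ln (ln (real (N d))) \<le> (1 + \<eta>) * L d + ln (real d) + ln 2" using elim(3,4) by simp
      have "((1 - \<eta>) * L d - ln 2) / L d \<le> ln (ln (real (N d))) / L d"
        using lo Lp by (intro divide_right_mono) auto
      moreover have "((1 - \<eta>) * L d - ln 2) / L d = (1 - \<eta>) - ln 2 / L d"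
        using Lp by (simp add: field_simps)
      ultimately have r1: "(1 - \<eta>) - ln 2 / L d \<le> ln (ln (real (N d))) / L d" by simp
      have "ln (ln (real (N d))) / L d \<le> ((1 + \<eta>) * L d + ln (real d) + ln 2) / L d"
        using up Lp by (intro divide_right_mono) auto
      moreover have "((1 + \<eta>) * L d + ln (real d) + ln 2) / L d = (1 + \<eta>) + ln (real d) / L d + ln 2 / L d"
        using Lp by (simp add: field_simps)
      ultimately have r2: "ln (ln (real (N d))) / L d \<le> (1 + \<eta>) + ln (real d) / L d + ln 2 / L d" by simp
      have b1: "\<bar>ln 2 / L d\<bar> < e / 4" and b2: "\<bar>ln (real d) / L d\<bar> < e / 4"
        using elim(1,2) by (simp_all add: dist_real_def)
      have c1: "ln 2 / L d < e / 4" "- (ln 2 / L d) < e / 4"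
        using b1 abs_ge_self[of "ln 2 / L d"] abs_ge_minus_self[of "ln 2 / L d"] by linarith+
      have c2: "ln (real d) / L d < e / 4"
        using b2 abs_ge_self[of "ln (real d) / L d"] by linarith
      show ?case unfolding dist_real_def abs_less_iff using r1 r2 c1 c2 \<eta>(3)
        by (intro conjI) linarith+
    qed
  qed
  have "(\<lambda>d. ln (ln (real (N d)))) \<sim>[at_top] L" by (rule asymp_equivI'[OF lim])
  thus "(\<lambda>d. ln (ln (real (n_tensor lam d \<epsilon>)))) \<sim>[at_top]
    (\<lambda>d. (\<beta> * real d / (s * \<bar>ln (1 - \<epsilon>\<^sup>2)\<bar>)) powr (1 / s))"
    unfolding rhs N_def .
qed



end
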